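(* Let $f:\{0,1\}^n\to\mathbb{R}$ be any function whose set of global maxima (optima) has size polynomial in $n$. Then the (1+1)~IA$^{\text{hyp}}$ using static hypermutation without FCM needs expected time exponential in $n$ (i.e. $e^{\Omega(n)}$) to find any of the optima.
   Context: The (1+1)~IA$^{\text{hyp}}$ maximises $f:\{0,1\}^n\to\mathbb{R}$: it initialises a single bit string $x$ uniformly at random; in each iteration it creates $y$ from $x$ by static hypermutation and replaces $x$ by $y$ if $f(y)\ge f(x)$. Static hypermutation has a constant parameter $0<c\le 1$ and mutation potential $M=cn$ (an integer). Without FCM (stop at first constructive mutation), static hypermutation creates $y$ by flipping exactly $M$ distinct bit positions of $x$ chosen uniformly at random. Time is measured in the number of iterations/fitness evaluations until an optimum is sampled. *)

theory Defs
  imports "HOL-Probability.Probability"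
begin

definition bitstrings :: "nat \<Rightarrow> bool list set" where
  "bitstrings n = {x. length x = n}"

definition optima :: "nat \<Rightarrow> (bool list \<Rightarrow> real) \<Rightarrow> bool list set" where
  "optima n f = {x \<in> bitstrings n. \<forall>y \<in> bitstrings n. f y \<le> f x}"

definition flip_bits :: "bool list \<Rightarrow> nat set \<Rightarrow> bool list" where
  "flip_bits x S = map (\<lambda>i. if i \<in> S then \<not> x ! i else x ! i) [0..<length x]"

definition static_hypermutation :: "nat \<Rightarrow> bool list \<Rightarrow> bool list pmf" where
  "static_hypermutation M x =
     map_pmf (flip_bits x) (pmf_of_set {S. S \<subseteq> {..<length x} \<and> card S = M})"

text \<open>State of the (1+1) IA: current search point and a flag recording whether an
  optimum has been sampled so far.\<close>
definition ia_init :: "nat \<Rightarrow> (bool list \<Rightarrow> real) \<Rightarrow> (bool list \<times> bool) pmf" where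
  "ia_init n f = map_pmf (\<lambda>x. (x, x \<in> optima n f)) (pmf_of_set (bitstrings n))"

definition ia_step :: "nat \<Rightarrow> nat \<Rightarrow> (bool list \<Rightarrow> real) \<Rightarrow> bool list \<times> bool
    \<Rightarrow> (bool list \<times> bool) pmf" where
  "ia_step n M f s =
     bind_pmf (static_hypermutation M (fst s))
       (\<lambda>y. return_pmf (if f y \<ge> f (fst s) then y else fst s, snd s \<or> y \<in> optima n f))"

definition ia_state :: "nat \<Rightarrow> nat \<Rightarrow> (bool list \<Rightarrow> real) \<Rightarrow> nat \<Rightarrow> (bool list \<times> bool) pmf" where
  "ia_state n M f t = ((\<lambda>p. bind_pmf p (ia_step n M f)) ^^ t) (ia_init n f)"

text \<open>Expected number of fitness evaluations T until an optimum is sampled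
  (the initial point is evaluation 1): E[T] = sum over t of Pr[T > t]
  = 1 + sum over t of Pr[no optimum sampled within t iterations].\<close>
definition ia_expected_time :: "nat \<Rightarrow> nat \<Rightarrow> (bool list \<Rightarrow> real) \<Rightarrow> ennreal" where
  "ia_expected_time n M f =
     1 + (\<Sum>t. ennreal (measure_pmf.prob (ia_state n M f t) {s. \<not> snd s}))"

end

theory Submission imports Defs "HOL-Real_Asymp.Real_Asymp" begin

lemma flip_len[simp]: "length (flip_bits x S) = length x"
  by (simp add: flip_bits_def)

lemma flip_nth: "i < length x \<Longrightarrow> flip_bits x S ! i = (if i \<in> S then \<not> x ! i else x ! i)"
  by (simp add: flip_bits_def)

lemma flip_inj: "inj_on (flip_bits x) {S. S \<subseteq> {..<length x} \<and> card S = M}"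
proof (rule inj_onI)
  fix S T assume S: "S \<in> {S. S \<subseteq> {..<length x} \<and> card S = M}"
    and T: "T \<in> {S. S \<subseteq> {..<length x} \<and> card S = M}" and e: "flip_bits x S = flip_bits x T"
  show "S = T"
  proof (rule set_eqI)
    fix i
    show "i \<in> S \<longleftrightarrow> i \<in> T"
    proof (cases "i < length x")
      case True
      from e have "flip_bits x S ! i = flip_bits x T ! i" by simp
      with True show ?thesis by (auto simp: flip_nth split: if_splits)
    next
      case False
      with S T show ?thesis by auto
    qed
  qed
qed

lemma Ss_finite: "finite {S. S \<subseteq> {..<n::nat} \<and> card S = M}"
  by (rule finite_subset[of _ "Pow {..<n}"]) auto

lemma Ss_card: "card {S. S \<subseteq> {..<n} \<and> card S = M} = n choose M"
  using n_subsets[of "{..<n::nat}" M] by simp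

lemma Ss_ne: "M \<le> n \<Longrightarrow> {S. S \<subseteq> {..<n} \<and> card S = M} \<noteq> {}"
proof -
  assume "M \<le> n"
  then have "{..<M} \<in> {S. S \<subseteq> {..<n} \<and> card S = M}" by auto
  then show ?thesis by blast
qed

lemma bits_eq: "bitstrings n = {xs. set xs \<subseteq> (UNIV::bool set) \<and> length xs = n}"
  by (simp add: bitstrings_def)

lemma bits_finite: "finite (bitstrings n)"
  unfolding bits_eq by (rule finite_lists_length_eq) simp

lemma bits_card: "card (bitstrings n) = 2 ^ n"
  unfolding bits_eq using card_lists_length_eq[of "UNIV::bool set" n] by simp

lemma bits_ne: "bitstrings n \<noteq> {}"
proof -
  have "replicate n True \<in> bitstrings n" by (simp add: bitstrings_def)
  then show ?thesis by blast
qed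

lemma optima_sub: "optima n f \<subseteq> bitstrings n"
  by (auto simp: optima_def)

lemma optima_finite: "finite (optima n f)"
  using optima_sub bits_finite by (rule finite_subset)

lemma hyp_set: "M \<le> length x \<Longrightarrow> set_pmf (static_hypermutation M x) \<subseteq> {y. length y = length x}"
  unfolding static_hypermutation_def
  using Ss_finite[of "length x" M] Ss_ne[of M "length x"] by auto

lemma hyp_prob:
  assumes "M \<le> length x" "finite A"
  shows "measure_pmf.prob (static_hypermutation M x) A \<le> card A / (length x choose M)"
proof -
  let ?S = "{S. S \<subseteq> {..<length x} \<and> card S = M}"
  have "measure_pmf.prob (static_hypermutation M x) A = card (?S \<inter> flip_bits x -` A) / card ?S"
    unfolding static_hypermutation_def using Ss_finite[of "length x" M] Ss_ne[OF assms(1)]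
    by (simp add: measure_pmf_of_set)
  also have "card ?S = length x choose M" by (rule Ss_card)
  also have "card (?S \<inter> flip_bits x -` A) \<le> card A"
  proof (rule card_inj_on_le[OF _ _ assms(2)])
    show "inj_on (flip_bits x) (?S \<inter> flip_bits x -` A)"
      by (rule inj_on_subset[OF flip_inj[of x M]]) auto
  qed auto
  finally show ?thesis by (simp add: divide_right_mono)
qed

lemma ia_step_map: "ia_step n M f s =
   map_pmf (\<lambda>y. (if f y \<ge> f (fst s) then y else fst s, snd s \<or> y \<in> optima n f))
      (static_hypermutation M (fst s))"
  by (simp add: ia_step_def map_pmf_def)

lemma state_Suc: "ia_state n M f (Suc t) = bind_pmf (ia_state n M f t) (ia_step n M f)"
  by (simp add: ia_state_def)

lemma state_0: "ia_state n M f 0 = ia_init n f"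
  by (simp add: ia_state_def)

lemma init_set: "set_pmf (ia_init n f) \<subseteq> {s. length (fst s) = n}"
  unfolding ia_init_def using bits_finite bits_ne by (auto simp: bitstrings_def)

lemma state_len: "M \<le> n \<Longrightarrow> set_pmf (ia_state n M f t) \<subseteq> {s. length (fst s) = n}"
proof (induction t)
  case 0 then show ?case using init_set by (simp add: state_0)
next
  case (Suc t)
  show ?case
  proof
    fix s assume "s \<in> set_pmf (ia_state n M f (Suc t))"
    then obtain s0 where s0: "s0 \<in> set_pmf (ia_state n M f t)" and s: "s \<in> set_pmf (ia_step n M f s0)"
      by (auto simp: state_Suc)
    from s0 Suc have l: "length (fst s0) = n" by auto
    from s obtain y where y: "y \<in> set_pmf (static_hypermutation M (fst s0))"
      and sy: "s = (if f y \<ge> f (fst s0) then y else fst s0, snd s0 \<or> y \<in> optima n f)"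
      by (auto simp: ia_step_map)
    from hyp_set[of M "fst s0"] y l Suc.prems have "length y = n" by auto
    with sy l show "s \<in> {s. length (fst s) = n}" by auto
  qed
qed


lemma step_bound:
  fixes p :: "(bool list \<times> bool) pmf" and r :: real
  assumes len: "\<And>s. s \<in> set_pmf p \<Longrightarrow> length (fst s) = n" and Mn: "M \<le> n"
    and r: "r = card (optima n f) / (n choose M)"
  shows "measure_pmf.prob (bind_pmf p (ia_step n M f)) {s. snd s}
          \<le> measure_pmf.prob p {s. snd s} + r"
proof -
  let ?X = "{s::bool list \<times> bool. snd s}"
  have r0: "r \<ge> 0" using r by simp
  have pw: "emeasure (measure_pmf (ia_step n M f s)) ?X \<le> indicator ?X s + ennreal r"
    if s: "s \<in> set_pmf p" for s
  proof -
    have l: "length (fst s) = n" using len s by simp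
    have "emeasure (measure_pmf (ia_step n M f s)) ?X
       = ennreal (measure_pmf.prob (static_hypermutation M (fst s)) {y. snd s \<or> y \<in> optima n f})"
      by (simp add: measure_pmf.emeasure_eq_measure ia_step_map vimage_def)
    also have "\<dots> \<le> indicator ?X s + ennreal r"
    proof (cases "snd s")
      case True
      then show ?thesis by (simp add: measure_pmf.prob_le_1)
    next
      case False
      have "measure_pmf.prob (static_hypermutation M (fst s)) (optima n f) \<le> r"
        using hyp_prob[of M "fst s" "optima n f"] l Mn optima_finite r by simp
      with False show ?thesis by (simp add: indicator_def ennreal_leI)
    qed
    finally show ?thesis .
  qed
  have "emeasure (measure_pmf (bind_pmf p (ia_step n M f))) ?X
        = (\<integral>\<^sup>+s. emeasure (measure_pmf (ia_step n M f s)) ?X \<partial>measure_pmf p)"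
    by simp
  also have "\<dots> \<le> (\<integral>\<^sup>+s. (indicator ?X s + ennreal r) \<partial>measure_pmf p)"
    by (rule nn_integral_mono_AE) (auto simp: AE_measure_pmf_iff intro: pw)
  also have "\<dots> = emeasure (measure_pmf p) ?X + ennreal r"
    by (subst nn_integral_add) (auto simp: measure_pmf.emeasure_space_1)
  also have "\<dots> = ennreal (measure_pmf.prob p ?X + r)"
    using r0 by (simp add: measure_pmf.emeasure_eq_measure ennreal_plus)
  finally have "ennreal (measure_pmf.prob (bind_pmf p (ia_step n M f)) ?X)
        \<le> ennreal (measure_pmf.prob p ?X + r)"
    by (simp only: measure_pmf.emeasure_eq_measure)
  then show ?thesis using r0 by (subst (asm) ennreal_le_iff) (auto intro: add_nonneg_nonneg)
qed

lemma init_bound: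
  assumes "M \<le> n"
  shows "measure_pmf.prob (ia_init n f) {s. snd s} \<le> card (optima n f) / (n choose M)"
proof -
  have "measure_pmf.prob (ia_init n f) {s. snd s} = card (bitstrings n \<inter> optima n f) / card (bitstrings n)"
    unfolding ia_init_def using bits_finite bits_ne
    by (simp add: measure_pmf_of_set vimage_def)
  also have "bitstrings n \<inter> optima n f = optima n f" using optima_sub by blast
  also have "card (bitstrings n) = (2::nat) ^ n" by (rule bits_card)
  also have "real (card (optima n f)) / real ((2::nat) ^ n) \<le> card (optima n f) / (n choose M)"
  proof (rule divide_left_mono)
    show "real (n choose M) \<le> real ((2::nat) ^ n)" using binomial_le_pow2[of n M] by linarith
    show "0 < real ((2::nat) ^ n) * real (n choose M)" using assms by simp
  qed simp
  finally show ?thesis .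
qed

lemma state_prob:
  assumes "M \<le> n"
  shows "measure_pmf.prob (ia_state n M f t) {s. snd s} \<le> (t+1) * (card (optima n f) / (n choose M))"
proof (induction t)
  case 0 then show ?case using init_bound[OF assms] by (simp add: state_0)
next
  case (Suc t)
  have "measure_pmf.prob (ia_state n M f (Suc t)) {s. snd s}
     \<le> measure_pmf.prob (ia_state n M f t) {s. snd s} + card (optima n f) / (n choose M)"
    unfolding state_Suc
    by (rule step_bound[OF _ assms refl]) (use state_len[OF assms] in auto)
  moreover have "(real (Suc t) + 1) * (card (optima n f) / (n choose M))
     = (real t + 1) * (card (optima n f) / (n choose M)) + card (optima n f) / (n choose M)"
    by (simp add: add_divide_distrib[symmetric] algebra_simps)
  ultimately show ?case using Suc.IH by linarith
qed


lemma hyp_all: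
  assumes "length x = n"
  shows "static_hypermutation n x = return_pmf (map Not x)"
proof -
  have q: "S = {..<length x}" if "S \<subseteq> {..<length x}" "card S = n" for S
    using card_subset_eq[of "{..<length x}" S] that assms by simp
  have e: "{S. S \<subseteq> {..<length x} \<and> card S = n} = {{..<n}}"
    using assms q by auto
  have "flip_bits x {..<n} = map Not x"
    using assms by (intro nth_equalityI) (auto simp: flip_nth)
  then show ?thesis unfolding static_hypermutation_def e by (simp add: pmf_of_set_singleton)
qed

definition goodset :: "nat \<Rightarrow> (bool list \<Rightarrow> real) \<Rightarrow> (bool list \<times> bool) set" where
  "goodset n f = {s. length (fst s) = n \<and> \<not> snd s \<and> fst s \<notin> optima n f \<and> map Not (fst s) \<notin> optima n f}"

lemma step_good:
  assumes "s \<in> goodset n f"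
  shows "emeasure (measure_pmf (ia_step n n f s)) (goodset n f) = 1"
proof -
  have l: "length (fst s) = n" using assms by (simp add: goodset_def)
  have "ia_step n n f s = return_pmf (if f (map Not (fst s)) \<ge> f (fst s) then map Not (fst s) else fst s,
          snd s \<or> map Not (fst s) \<in> optima n f)"
    by (simp add: ia_step_map hyp_all[OF l])
  moreover have "(if f (map Not (fst s)) \<ge> f (fst s) then map Not (fst s) else fst s,
          snd s \<or> map Not (fst s) \<in> optima n f) \<in> goodset n f"
    using assms by (auto simp: goodset_def comp_def)
  ultimately show ?thesis by (simp add: measure_pmf.emeasure_eq_measure)
qed

lemma good_mono:
  "measure_pmf.prob p (goodset n f) \<le> measure_pmf.prob (bind_pmf p (ia_step n n f)) (goodset n f)"
proof -
  have "emeasure (measure_pmf p) (goodset n f) = (\<integral>\<^sup>+s. indicator (goodset n f) s \<partial>measure_pmf p)"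
    by simp
  also have "\<dots> \<le> (\<integral>\<^sup>+s. emeasure (measure_pmf (ia_step n n f s)) (goodset n f) \<partial>measure_pmf p)"
    by (rule nn_integral_mono) (auto simp: indicator_def step_good)
  also have "\<dots> = emeasure (measure_pmf (bind_pmf p (ia_step n n f))) (goodset n f)" by simp
  finally show ?thesis by (simp add: measure_pmf.emeasure_eq_measure)
qed

lemma init_good:
  "1 - 2 * card (optima n f) / 2 ^ n \<le> measure_pmf.prob (ia_init n f) (goodset n f)"
proof -
  let ?U = "pmf_of_set (bitstrings n)"
  let ?O = "optima n f"
  have fin: "finite (bitstrings n)" "bitstrings n \<noteq> {}" by (rule bits_finite, rule bits_ne)
  have cb: "real (card (bitstrings n)) = 2 ^ n" using bits_card[of n] by simp
  have "measure_pmf.prob (ia_init n f) (goodset n f)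
      = measure_pmf.prob ?U {x. length x = n \<and> x \<notin> ?O \<and> map Not x \<notin> ?O}"
    unfolding ia_init_def by (simp add: goodset_def vimage_def)
  also have "\<dots> \<ge> measure_pmf.prob ?U (UNIV - (?O \<union> map Not ` ?O))"
  proof -
    have "measure_pmf.prob ?U (UNIV - (?O \<union> map Not ` ?O)) =
          measure_pmf.prob ?U ((UNIV - (?O \<union> map Not ` ?O)) \<inter> bitstrings n)"
      using fin by (simp add: measure_pmf_of_set Int_assoc Int_commute)
    also have "\<dots> \<le> measure_pmf.prob ?U {x. length x = n \<and> x \<notin> ?O \<and> map Not x \<notin> ?O}"
    proof (rule measure_pmf.finite_measure_mono)
      show "(UNIV - (?O \<union> map Not ` ?O)) \<inter> bitstrings n \<subseteq> {x. length x = n \<and> x \<notin> ?O \<and> map Not x \<notin> ?O}"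
      proof
        fix x assume x: "x \<in> (UNIV - (?O \<union> map Not ` ?O)) \<inter> bitstrings n"
        have "map Not (map Not x) = x" by (simp add: comp_def)
        then have "map Not x \<in> ?O \<Longrightarrow> x \<in> map Not ` ?O" by (metis image_eqI)
        with x show "x \<in> {x. length x = n \<and> x \<notin> ?O \<and> map Not x \<notin> ?O}"
          by (auto simp: bitstrings_def)
      qed
    qed simp
    finally show ?thesis .
  qed
  moreover have "measure_pmf.prob ?U (UNIV - (?O \<union> map Not ` ?O)) = 1 - measure_pmf.prob ?U (?O \<union> map Not ` ?O)"
    using measure_pmf.prob_compl[of "?O \<union> map Not ` ?O" ?U] by simp
  moreover have "measure_pmf.prob ?U (?O \<union> map Not ` ?O) \<le> 2 * card ?O / 2 ^ n"
  proof -
    have "measure_pmf.prob ?U (?O \<union> map Not ` ?O) \<le> measure_pmf.prob ?U ?O + measure_pmf.prob ?U (map Not ` ?O)"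
      by (rule measure_Un_le) auto
    also have "measure_pmf.prob ?U ?O \<le> card ?O / 2 ^ n"
    proof -
      have "measure_pmf.prob ?U ?O = card (bitstrings n \<inter> ?O) / 2 ^ n"
        using fin cb by (simp add: measure_pmf_of_set)
      also have "card (bitstrings n \<inter> ?O) \<le> card ?O" by (rule card_mono[OF optima_finite]) auto
      finally show ?thesis by (simp add: divide_right_mono)
    qed
    also have "measure_pmf.prob ?U (map Not ` ?O) \<le> card ?O / 2 ^ n"
    proof -
      have "measure_pmf.prob ?U (map Not ` ?O) = card (bitstrings n \<inter> map Not ` ?O) / 2 ^ n"
        using fin cb by (simp add: measure_pmf_of_set)
      also have "card (bitstrings n \<inter> map Not ` ?O) \<le> card (map Not ` ?O)"
        by (rule card_mono) (auto intro: optima_finite)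
      also have "card (map Not ` ?O) \<le> card ?O" by (rule card_image_le[OF optima_finite])
      finally show ?thesis by (simp add: divide_right_mono)
    qed
    finally show ?thesis by simp
  qed
  ultimately show ?thesis by linarith
qed

lemma state_good:
  "1 - 2 * card (optima n f) / 2 ^ n \<le> measure_pmf.prob (ia_state n n f t) {s. \<not> snd s}"
proof -
  have "measure_pmf.prob (ia_init n f) (goodset n f) \<le> measure_pmf.prob (ia_state n n f t) (goodset n f)"
  proof (induction t)
    case 0 then show ?case by (simp add: state_0)
  next
    case (Suc t) then show ?case using good_mono[of "ia_state n n f t" n f] by (simp add: state_Suc)
  qed
  also have "\<dots> \<le> measure_pmf.prob (ia_state n n f t) {s. \<not> snd s}"
    by (rule measure_pmf.finite_measure_mono) (auto simp: goodset_def)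
  finally show ?thesis using init_good[of n f] by linarith
qed


lemma time_lower:
  assumes "\<And>t. t < T \<Longrightarrow> 1/2 \<le> measure_pmf.prob (ia_state n M f t) {s. \<not> snd s}"
  shows "ennreal (real T / 2) \<le> ia_expected_time n M f"
proof -
  let ?a = "\<lambda>t. measure_pmf.prob (ia_state n M f t) {s. \<not> snd s}"
  have "real T / 2 = (\<Sum>t<T. (1/2::real))" by simp
  also have "\<dots> \<le> (\<Sum>t<T. ?a t)" by (rule sum_mono) (use assms in auto)
  finally have "ennreal (real T / 2) \<le> ennreal (\<Sum>t<T. ?a t)" by (rule ennreal_leI)
  also have "\<dots> = (\<Sum>t<T. ennreal (?a t))" by (simp add: sum_ennreal)
  also have "\<dots> \<le> (\<Sum>t. ennreal (?a t))" by (rule sum_le_suminf) auto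
  also have "\<dots> \<le> ia_expected_time n M f" unfolding ia_expected_time_def by simp
  finally show ?thesis .
qed

lemma compl_snd: "measure_pmf.prob p {s. \<not> snd s} = 1 - measure_pmf.prob p {s. snd s}"
proof -
  have e: "{s. \<not> snd s} = UNIV - {s. snd s}" by auto
  have "measure_pmf.prob p (UNIV - {s. snd s}) = 1 - measure_pmf.prob p {s. snd s}"
    using measure_pmf.prob_compl[of "{s. snd s}" p] by simp
  then show ?thesis by (simp only: e)
qed

lemma asym1: assumes "d > 0" shows "filterlim (\<lambda>n::nat. exp (d * real n) / real n ^ k) at_top at_top"
  using assms by real_asymp

lemma asym2: "filterlim (\<lambda>n::nat. 2 ^ n / real n ^ k) at_top at_top"
  by real_asymp

lemma card_opt_bound:
  assumes "real (card (optima n f)) \<le> C * real n ^ k" "n \<ge> 1"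
  shows "real (card (optima n f)) \<le> (\<bar>C\<bar> + 1) * real n ^ k"
proof -
  have "C * real n ^ k \<le> (\<bar>C\<bar> + 1) * real n ^ k" by (rule mult_right_mono) auto
  with assms show ?thesis by linarith
qed


lemma case_one:
  fixes C :: real and k :: nat
  shows "\<exists>N. \<forall>n\<ge>N. \<forall>(M::nat) (f :: bool list \<Rightarrow> real).
           real M = 1 * real n \<longrightarrow> real (card (optima n f)) \<le> C * real n ^ k \<longrightarrow>
           ia_expected_time n M f \<ge> ennreal (exp (1 * real n))"
proof -
  define C' where "C' = \<bar>C\<bar> + 1"
  have "eventually (\<lambda>n::nat. 2 ^ n / real n ^ k \<ge> 4 * C') at_top"
    using asym2[of k] by (simp add: filterlim_at_top)
  then obtain N1 where N1: "\<And>n. n \<ge> N1 \<Longrightarrow> 2 ^ n / real n ^ k \<ge> 4 * C'"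
    by (auto simp: eventually_at_top_linorder)
  have main: "ia_expected_time n M f \<ge> ennreal (exp (1 * real n))"
    if n: "n \<ge> max N1 1" and M: "real M = 1 * real n" and q: "real (card (optima n f)) \<le> C * real n ^ k"
    for n M f
  proof -
    have Mn: "M = n" using M by simp
    have q': "real (card (optima n f)) \<le> C' * real n ^ k"
      using card_opt_bound[OF q] n unfolding C'_def by simp
    have nk: "real n ^ k > 0" using n by simp
    have "4 * C' \<le> 2 ^ n / real n ^ k" using N1 n by simp
    then have "4 * C' * real n ^ k \<le> 2 ^ n" using nk by (simp add: field_simps)
    with q' have "4 * real (card (optima n f)) \<le> 2 ^ n" by linarith
    then have h: "2 * real (card (optima n f)) / 2 ^ n \<le> 1/2" by (simp add: field_simps)
    define T where "T = nat \<lceil>2 * exp (real n)\<rceil>"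
    have "1/2 \<le> measure_pmf.prob (ia_state n M f t) {s. \<not> snd s}" for t
      using state_good[of n f t] h unfolding Mn by linarith
    then have "ennreal (real T / 2) \<le> ia_expected_time n M f" by (rule time_lower)
    moreover have "exp (real n) \<le> real T / 2" unfolding T_def by linarith
    ultimately show ?thesis using ennreal_leI order_trans by (metis mult_1)
  qed
  show ?thesis
    by (intro exI[of _ "max N1 1"] allI impI main) auto
qed


lemma case_lt:
  fixes c C :: real and k :: nat
  assumes c0: "0 < c" and c1: "c < 1"
  shows "\<exists>\<delta>>0. \<exists>N. \<forall>n\<ge>N. \<forall>(M::nat) (f :: bool list \<Rightarrow> real).
           real M = c * real n \<longrightarrow> real (card (optima n f)) \<le> C * real n ^ k \<longrightarrow>
           ia_expected_time n M f \<ge> ennreal (exp (\<delta> * real n))"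
proof -
  define C' where "C' = \<bar>C\<bar> + 1"
  have C'0: "C' > 0" unfolding C'_def by simp
  define r where "r = 1 / c"
  have r1: "r > 1" unfolding r_def using c0 c1 by simp
  define d where "d = c * ln r"
  have d0: "d > 0" unfolding d_def using c0 r1 by simp
  have "eventually (\<lambda>n::nat. exp ((d/2) * real n) / real n ^ k \<ge> 8 * C' + 8) at_top"
    using asym1[of "d/2" k] d0 by (simp add: filterlim_at_top)
  then obtain N1 where N1: "\<And>n. n \<ge> N1 \<Longrightarrow> exp ((d/2) * real n) / real n ^ k \<ge> 8 * C' + 8"
    by (auto simp: eventually_at_top_linorder)
  have main: "ia_expected_time n M f \<ge> ennreal (exp ((d/2) * real n))"
    if n: "n \<ge> max N1 1" and M: "real M = c * real n" and q: "real (card (optima n f)) \<le> C * real n ^ k"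
    for n M f
  proof -
    define q' where "q' = real (card (optima n f))"
    define Q where "Q = C' * real n ^ k"
    define B where "B = real (n choose M)"
    define E where "E = exp ((d/2) * real n)"
    have n1: "real n \<ge> 1" using n by simp
    have qQ: "q' \<le> Q" using card_opt_bound[OF q] n unfolding C'_def Q_def q'_def by simp
    have q0: "q' \<ge> 0" unfolding q'_def by simp
    have nk: "real n ^ k > 0" using n by simp
    have Q0: "Q > 0" unfolding Q_def using C'0 nk by simp
    have "c * real n \<le> 1 * real n" using c1 n1 by (intro mult_right_mono) auto
    then have Mn: "M \<le> n" using M by simp
    have "c * real n > 0" using c0 n1 by simp
    then have M0: "M > 0" using M by simp
    have nM: "real n / real M = r" unfolding r_def using M c0 n1 by (simp add: field_simps)
    have "r ^ M \<le> B" unfolding B_def using binomial_ge_n_over_k_pow_k[OF Mn, where 'a=real] nM by simp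
    moreover have "r ^ M = exp (d * real n)"
    proof -
      have "r ^ M = exp (ln r) ^ M" using r1 by simp
      also have "\<dots> = exp (real M * ln r)" by (simp add: exp_of_nat_mult)
      also have "real M * ln r = d * real n" unfolding d_def using M by simp
      finally show ?thesis .
    qed
    ultimately have BE: "exp (d * real n) \<le> B" by simp
    have EE: "exp (d * real n) = E * E" unfolding E_def by (simp flip: exp_add)
    have E1: "E \<ge> 1" unfolding E_def using d0 n1 by simp
    have B0: "B > 0" using BE by (metis exp_gt_zero less_le_trans)
    have g: "E / real n ^ k \<ge> 8 * C' + 8" using N1 n unfolding E_def by simp
    define T where "T = nat \<lfloor>B / (2 * Q)\<rfloor>"
    have TB: "real T \<le> B / (2 * Q)" unfolding T_def using B0 Q0 by simp
    have TB2: "real T \<ge> B / (2 * Q) - 1" unfolding T_def by linarith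
    have "1/2 \<le> measure_pmf.prob (ia_state n M f t) {s. \<not> snd s}" if t: "t < T" for t
    proof -
      have "measure_pmf.prob (ia_state n M f t) {s. snd s} \<le> (real t + 1) * (q' / B)"
        using state_prob[OF Mn, of f t] unfolding q'_def B_def by simp
      also have "\<dots> \<le> real T * (Q / B)"
      proof (rule mult_mono)
        show "real t + 1 \<le> real T" using t by simp
        show "q' / B \<le> Q / B" using qQ B0 by (simp add: divide_right_mono)
      qed (use Q0 B0 q0 in auto)
      also have "\<dots> \<le> B / (2 * Q) * (Q / B)"
        by (rule mult_right_mono[OF TB]) (use Q0 B0 in simp)
      also have "\<dots> = 1/2" using Q0 B0 by (simp add: field_simps)
      finally show ?thesis using compl_snd[of "ia_state n M f t"] by linarith
    qed
    then have "ennreal (real T / 2) \<le> ia_expected_time n M f" by (rule time_lower)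
    moreover have "E \<le> real T / 2"
    proof -
      have "E * (8 * C' + 8) \<le> E * (E / real n ^ k)" using g E1 by (intro mult_left_mono) auto
      also have "\<dots> = exp (d * real n) / real n ^ k" using EE by simp
      also have "\<dots> \<le> B / real n ^ k" using BE nk by (simp add: divide_right_mono)
      finally have "E * (8 * C' + 8) \<le> B / real n ^ k" .
      then have "E * (8 * C' + 8) / (4 * C') \<le> (B / real n ^ k) / (4 * C')"
        by (rule divide_right_mono) (use C'0 in simp)
      also have "(B / real n ^ k) / (4 * C') = B / (4 * Q)"
        unfolding Q_def by (simp add: divide_divide_eq_left ac_simps)
      finally have "E * (8 * C' + 8) / (4 * C') \<le> B / (4 * Q)" .
      moreover have "2 * E \<le> E * (8 * C' + 8) / (4 * C')"
        using C'0 E1 by (simp add: field_simps)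
      ultimately have "2 * E \<le> B / (4 * Q)" by linarith
      moreover have "B / (4 * Q) = (B / (2 * Q)) / 2" by simp
      ultimately show ?thesis using TB2 E1 by linarith
    qed
    ultimately show ?thesis unfolding E_def using ennreal_leI order_trans by metis
  qed
  show ?thesis
    by (intro exI[of _ "d/2"] conjI exI[of _ "max N1 1"] allI impI main) (use d0 in auto)
qed

theorem theorem1:
  fixes c :: real and C :: real and k :: nat
  assumes "0 < c" and "c \<le> 1"
  shows "\<exists>\<delta>>0. \<exists>N. \<forall>n\<ge>N. \<forall>(M::nat) (f :: bool list \<Rightarrow> real).
           real M = c * real n \<longrightarrow> real (card (optima n f)) \<le> C * real n ^ k \<longrightarrow>
           ia_expected_time n M f \<ge> ennreal (exp (\<delta> * real n))"
proof (cases "c = 1")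
  case True
  obtain N where "\<forall>n\<ge>N. \<forall>(M::nat) (f :: bool list \<Rightarrow> real).
           real M = 1 * real n \<longrightarrow> real (card (optima n f)) \<le> C * real n ^ k \<longrightarrow>
           ia_expected_time n M f \<ge> ennreal (exp (1 * real n))"
    using case_one[of C k] by blast
  then show ?thesis using True by (intro exI[of _ 1]) auto
next
  case False
  with assms have "c < 1" by simp
  with assms(1) show ?thesis by (rule case_lt)
qed

end
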